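(* In any execution of the algorithm described in the context on a camera object $S$ and an associated versioned CAS object $O$, suppose an invocation of initTS makes the timestamp of some VNode $n$ valid. Then $n$ is the head of the version list of $O$ both when that initTS reads $S.\mathit{timestamp}$ and when it performs its CAS on $n.ts$.
   Context: Camera $S$ has an integer field timestamp, initially 0; takeSnapshot(): read $t:=S.\mathit{timestamp}$, perform CAS$(S.\mathit{timestamp},t,t+1)$, return $t$. A VNode has fields val and nextv (both immutable after creation) and ts (an integer or special value TBD, initially TBD). Versioned CAS object $O$ has a field $\mathit{VHead}$. Constructor with value $v$: $\mathit{VHead}:=$ new VNode(val $v$, nextv NULL); initTS($\mathit{VHead}$). initTS($n$): if $n.ts=$TBD, read $c:=S.\mathit{timestamp}$ and CAS$(n.ts,\mathrm{TBD},c)$. readSnapshot($ts$): $node:=\mathit{VHead}$; initTS($node$); while $node.ts>ts$, $node:=node.nextv$; return $node.val$. vRead(): $h:=\mathit{VHead}$; initTS($h$); return $h.val$. vCAS(oldV,newV): $h:=\mathit{VHead}$; initTS($h$); if $h.val\neq$ oldV return false; if newV $=$ oldV return true; $m:=$ new VNode(val newV, nextv $h$); if CAS$(\mathit{VHead},h,m)$ succeeds, initTS($m$) and return true; else delete $m$, call initTS on the current value of $\mathit{VHead}$, return false. The version list of $O$ is obtained by starting at the VNode pointed to by $\mathit{VHead}$ and following nextv pointers; its head is the VNode pointed to by $\mathit{VHead}$. A VNode's timestamp is valid if its ts field is not TBD, invalid otherwise; "makes the timestamp valid" means its CAS on $n.ts$ changes it from TBD to an integer. *)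

theory Defs
  imports Main
begin

text \<open>
  Every shared-memory access (read / CAS of S.timestamp, read / CAS of VHead,
  read / CAS of a ts field) is one atomic step of one process.  Fields val and
  nextv are immutable, so reading them is merged into neighbouring steps; the
  allocation of a new VNode is private until published and is merged into the
  CAS on VHead.  VNodes are identified by natural numbers; TBD is None.
\<close>

text \<open>Continuation after an initTS call: who called it.\<close>
datatype 'v cont =
    CCtor
  | CRS int        \<comment> \<open>readSnapshot(ts)\<close>
  | CVR            \<comment> \<open>vRead\<close>
  | CVC 'v 'v      \<comment> \<open>vCAS(oldV,newV), before comparing h.val\<close>
  | CRet           \<comment> \<open>vCAS: initTS(m) after success, or initTS(VHead) after failure\<close>

datatype iphase =
    IChk           \<comment> \<open>about to read n.ts\<close>
  | IRead          \<comment> \<open>about to read S.timestamp\<close>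
  | ICas int       \<comment> \<open>about to CAS(n.ts, TBD, c)\<close>

datatype 'v pc =
    Idle
  | TakeRead                 \<comment> \<open>takeSnapshot: about to read S.timestamp\<close>
  | TakeCas int              \<comment> \<open>takeSnapshot: about to CAS(S.timestamp,t,t+1)\<close>
  | RSHead int               \<comment> \<open>readSnapshot(ts): about to read VHead\<close>
  | RSLoop int nat           \<comment> \<open>readSnapshot(ts): loop test at node\<close>
  | VRHead                   \<comment> \<open>vRead: about to read VHead\<close>
  | VCHead 'v 'v             \<comment> \<open>vCAS: about to read VHead\<close>
  | VCCas 'v 'v nat          \<comment> \<open>vCAS: compare h.val, then CAS(VHead,h,m)\<close>
  | VCFailHead               \<comment> \<open>vCAS failed: about to read VHead\<close>
  | Init nat iphase "'v cont"

record ('p, 'v) state =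
  stamp :: int                     \<comment> \<open>S.timestamp\<close>
  vhead :: nat                     \<comment> \<open>O.VHead\<close>
  tsf   :: "nat \<Rightarrow> int option"      \<comment> \<open>ts fields, None = TBD\<close>
  valf  :: "nat \<Rightarrow> 'v"
  nxt   :: "nat \<Rightarrow> nat option"      \<comment> \<open>nextv fields, None = NULL\<close>
  alloc :: nat                     \<comment> \<open>next fresh node identifier\<close>
  ctor_started :: bool
  ctor_done :: bool
  pcs :: "'p \<Rightarrow> 'v pc"

definition setpc :: "('p, 'v) state \<Rightarrow> 'p \<Rightarrow> 'v pc \<Rightarrow> ('p, 'v) state" where
  "setpc s p x = s\<lparr>pcs := (pcs s)(p := x)\<rparr>"

fun cont_next :: "'v cont \<Rightarrow> nat \<Rightarrow> 'v pc" where
  "cont_next CCtor n = Idle"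
| "cont_next (CRS t) n = RSLoop t n"
| "cont_next CVR n = Idle"
| "cont_next (CVC a b) n = VCCas a b n"
| "cont_next CRet n = Idle"

definition finish :: "('p, 'v) state \<Rightarrow> 'p \<Rightarrow> 'v cont \<Rightarrow> nat \<Rightarrow> ('p, 'v) state" where
  "finish s p k n =
     setpc (if k = CCtor then s\<lparr>ctor_done := True\<rparr> else s) p (cont_next k n)"

text \<open>Initial state: S.timestamp = 0; node 0 is the node the constructor
  (with initial value v0) will create; it is not reachable before the
  constructor is invoked, since no operation on O may be invoked before
  the constructor has returned.\<close>
definition init_state :: "'v \<Rightarrow> ('p, 'v) state" where
  "init_state v0 = \<lparr>stamp = 0, vhead = 0, tsf = (\<lambda>_. None),
     valf = (\<lambda>_. undefined)(0 := v0), nxt = (\<lambda>_. None), alloc = 1,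
     ctor_started = False, ctor_done = False, pcs = (\<lambda>_. Idle)\<rparr>"

inductive step :: "'p \<Rightarrow> ('p, 'v) state \<Rightarrow> ('p, 'v) state \<Rightarrow> bool" where
  inv_ctor: "pcs s p = Idle \<Longrightarrow> \<not> ctor_started s \<Longrightarrow>
     step p s (setpc (s\<lparr>ctor_started := True\<rparr>) p (Init 0 IChk CCtor))"
| inv_take: "pcs s p = Idle \<Longrightarrow> step p s (setpc s p TakeRead)"
| inv_rs: "pcs s p = Idle \<Longrightarrow> ctor_done s \<Longrightarrow> step p s (setpc s p (RSHead t))"
| inv_vr: "pcs s p = Idle \<Longrightarrow> ctor_done s \<Longrightarrow> step p s (setpc s p VRHead)"
| inv_vc: "pcs s p = Idle \<Longrightarrow> ctor_done s \<Longrightarrow> step p s (setpc s p (VCHead a b))"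
| take_read: "pcs s p = TakeRead \<Longrightarrow> step p s (setpc s p (TakeCas (stamp s)))"
| take_cas: "pcs s p = TakeCas t \<Longrightarrow>
     step p s (setpc (if stamp s = t then s\<lparr>stamp := t + 1\<rparr> else s) p Idle)"
| init_chk_valid: "pcs s p = Init n IChk k \<Longrightarrow> tsf s n \<noteq> None \<Longrightarrow> step p s (finish s p k n)"
| init_chk_tbd: "pcs s p = Init n IChk k \<Longrightarrow> tsf s n = None \<Longrightarrow>
     step p s (setpc s p (Init n IRead k))"
| init_read: "pcs s p = Init n IRead k \<Longrightarrow> step p s (setpc s p (Init n (ICas (stamp s)) k))"
| init_cas: "pcs s p = Init n (ICas c) k \<Longrightarrow>
     step p s (finish (if tsf s n = None then s\<lparr>tsf := (tsf s)(n := Some c)\<rparr> else s) p k n)"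
| rs_head: "pcs s p = RSHead t \<Longrightarrow> step p s (setpc s p (Init (vhead s) IChk (CRS t)))"
| rs_stop: "pcs s p = RSLoop t n \<Longrightarrow> tsf s n = Some x \<Longrightarrow> x \<le> t \<Longrightarrow> step p s (setpc s p Idle)"
| rs_next: "pcs s p = RSLoop t n \<Longrightarrow> tsf s n = Some x \<Longrightarrow> x > t \<Longrightarrow> nxt s n = Some n' \<Longrightarrow>
     step p s (setpc s p (RSLoop t n'))"
| vr_head: "pcs s p = VRHead \<Longrightarrow> step p s (setpc s p (Init (vhead s) IChk CVR))"
| vc_head: "pcs s p = VCHead a b \<Longrightarrow> step p s (setpc s p (Init (vhead s) IChk (CVC a b)))"
| vc_ret: "pcs s p = VCCas a b h \<Longrightarrow> valf s h \<noteq> a \<or> b = a \<Longrightarrow> step p s (setpc s p Idle)"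
| vc_succ: "pcs s p = VCCas a b h \<Longrightarrow> valf s h = a \<Longrightarrow> b \<noteq> a \<Longrightarrow> vhead s = h \<Longrightarrow>
     step p s (setpc (s\<lparr>valf := (valf s)(alloc s := b), nxt := (nxt s)(alloc s := Some h),
                        tsf := (tsf s)(alloc s := None), alloc := Suc (alloc s),
                        vhead := alloc s\<rparr>) p (Init (alloc s) IChk CRet))"
| vc_fail: "pcs s p = VCCas a b h \<Longrightarrow> valf s h = a \<Longrightarrow> b \<noteq> a \<Longrightarrow> vhead s \<noteq> h \<Longrightarrow>
     step p s (setpc (s\<lparr>valf := (valf s)(alloc s := b), nxt := (nxt s)(alloc s := Some h),
                        tsf := (tsf s)(alloc s := None), alloc := Suc (alloc s)\<rparr>) p VCFailHead)"
| vc_fail_head: "pcs s p = VCFailHead \<Longrightarrow> step p s (setpc s p (Init (vhead s) IChk CRet))"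

text \<open>A (finite prefix of an) execution: states st 0 .. st N, where step i is
  taken by process act i.\<close>
definition execution :: "'v \<Rightarrow> (nat \<Rightarrow> ('p, 'v) state) \<Rightarrow> (nat \<Rightarrow> 'p) \<Rightarrow> nat \<Rightarrow> bool" where
  "execution v0 st act N \<longleftrightarrow> st 0 = init_state v0 \<and> (\<forall>i<N. step (act i) (st i) (st (Suc i)))"

end

theory Submission
  imports Defs
begin

definition Inv :: "('p, 'v) state \<Rightarrow> bool" where
  "Inv s \<longleftrightarrow> vhead s < alloc s \<and>
     (\<forall>p n ph k. pcs s p = Init n ph k \<longrightarrow> n < alloc s \<and> (n = vhead s \<or> tsf s n \<noteq> None)) \<and>
     (\<forall>p a b h. pcs s p = VCCas a b h \<longrightarrow> h < alloc s \<and> tsf s h \<noteq> None) \<and>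
     (\<not> ctor_started s \<longrightarrow> vhead s = 0 \<and> \<not> ctor_done s \<and>
        (\<forall>p. pcs s p = Idle \<or> pcs s p = TakeRead \<or> (\<exists>t. pcs s p = TakeCas t)))"

lemma Inv_setpc_simple:
  assumes "Inv s" "\<And>n ph k. x \<noteq> Init n ph k" "\<And>a b h. x \<noteq> VCCas a b h"
    "\<not> ctor_started s \<Longrightarrow> x = Idle \<or> x = TakeRead \<or> (\<exists>t. x = TakeCas t)"
  shows "Inv (setpc s p x)"
  using assms unfolding Inv_def setpc_def by auto

lemma Inv_setpc_init:
  assumes "Inv s" "n < alloc s" "n = vhead s \<or> tsf s n \<noteq> None" "ctor_started s"
  shows "Inv (setpc s p (Init n ph k))"
  using assms unfolding Inv_def setpc_def by auto

lemma Inv_setpc_vc: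
  assumes "Inv s" "h < alloc s" "tsf s h \<noteq> None" "ctor_started s"
  shows "Inv (setpc s p (VCCas a b h))"
  using assms unfolding Inv_def setpc_def by auto

lemma Inv_ctor_done:
  assumes "Inv s" "ctor_started s" shows "Inv (s\<lparr>ctor_done := True\<rparr>)"
  using assms unfolding Inv_def by auto

lemma Inv_tsf:
  assumes "Inv s" shows "Inv (s\<lparr>tsf := (tsf s)(n := Some c)\<rparr>)"
  using assms unfolding Inv_def by auto

lemma cont_next_cases: "cont_next k n = Idle \<or> (\<exists>t. cont_next k n = RSLoop t n) \<or> (\<exists>a b. cont_next k n = VCCas a b n \<and> k = CVC a b)"
  by (cases k) auto

lemma Inv_finish:
  assumes "Inv s" "n < alloc s" "tsf s n \<noteq> None" "ctor_started s"
  shows "Inv (finish s p k n)"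
proof -
  define s0 where "s0 = (if k = CCtor then s\<lparr>ctor_done := True\<rparr> else s)"
  have i: "Inv s0"
    using assms Inv_ctor_done unfolding s0_def by auto
  have c: "ctor_started s0" "n < alloc s0" "tsf s0 n \<noteq> None" using assms unfolding s0_def by auto
  have f: "finish s p k n = setpc s0 p (cont_next k n)" unfolding finish_def s0_def by simp
  show ?thesis unfolding f
    using cont_next_cases[of k n]
  proof (elim disjE exE conjE)
    assume "cont_next k n = Idle" then show "Inv (setpc s0 p (cont_next k n))"
      using Inv_setpc_simple[OF i] by simp
  next
    fix t assume "cont_next k n = RSLoop t n" then show "Inv (setpc s0 p (cont_next k n))"
      using Inv_setpc_simple[OF i] c by simp
  next
    fix a b assume "cont_next k n = VCCas a b n" "k = CVC a b"
    then show "Inv (setpc s0 p (cont_next k n))"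
      using Inv_setpc_vc[OF i] c by simp
  qed
qed

lemma Inv_Init: "Inv s \<Longrightarrow> pcs s p = Init n ph k \<Longrightarrow> n < alloc s \<and> (n = vhead s \<or> tsf s n \<noteq> None)"
  unfolding Inv_def by blast
lemma Inv_VC: "Inv s \<Longrightarrow> pcs s p = VCCas a b h \<Longrightarrow> h < alloc s \<and> tsf s h \<noteq> None"
  unfolding Inv_def by blast
lemma Inv_vhead: "Inv s \<Longrightarrow> vhead s < alloc s"
  unfolding Inv_def by blast
lemma Inv_started: "Inv s \<Longrightarrow> pcs s p = x \<Longrightarrow> x \<noteq> Idle \<Longrightarrow> x \<noteq> TakeRead \<Longrightarrow> (\<And>t. x \<noteq> TakeCas t) \<Longrightarrow> ctor_started s"
  unfolding Inv_def by metis

lemma Inv_step: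
  assumes "step q s s'" "Inv s"
  shows "Inv s'"
  using assms
proof (induction rule: step.induct)
  case (inv_ctor s p)
  then show ?case unfolding Inv_def setpc_def by auto
next
  case (inv_take s p)
  then show ?case by (intro Inv_setpc_simple) auto
next
  case (inv_rs s p t)
  then show ?case by (intro Inv_setpc_simple) (auto simp: Inv_def)
next
  case (inv_vr s p)
  then show ?case by (intro Inv_setpc_simple) (auto simp: Inv_def)
next
  case (inv_vc s p a b)
  then show ?case by (intro Inv_setpc_simple) (auto simp: Inv_def)
next
  case (take_read s p)
  then show ?case by (intro Inv_setpc_simple) auto
next
  case (take_cas s p t)
  have "Inv (if stamp s = t then s\<lparr>stamp := t + 1\<rparr> else s)" using take_cas unfolding Inv_def by auto
  then show ?case by (rule Inv_setpc_simple) auto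
next
  case (init_chk_valid s p n k)
  have a1: "n < alloc s" using Inv_Init[OF \<open>Inv s\<close> init_chk_valid(1)] by simp
  have a2: "ctor_started s" by (rule Inv_started[OF \<open>Inv s\<close> init_chk_valid(1)]) simp_all
  show ?case by (rule Inv_finish[OF \<open>Inv s\<close> a1 init_chk_valid(2) a2])
next
  case (init_chk_tbd s p n k)
  have a1: "n < alloc s" "n = vhead s \<or> tsf s n \<noteq> None" using Inv_Init[OF \<open>Inv s\<close> init_chk_tbd(1)] by simp_all
  have a2: "ctor_started s" by (rule Inv_started[OF \<open>Inv s\<close> init_chk_tbd(1)]) simp_all
  show ?case by (rule Inv_setpc_init[OF \<open>Inv s\<close> a1 a2])
next
  case (init_read s p n k)
  have a1: "n < alloc s" "n = vhead s \<or> tsf s n \<noteq> None" using Inv_Init[OF \<open>Inv s\<close> init_read(1)] by simp_all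
  have a2: "ctor_started s" by (rule Inv_started[OF \<open>Inv s\<close> init_read(1)]) simp_all
  show ?case by (rule Inv_setpc_init[OF \<open>Inv s\<close> a1 a2])
next
  case (init_cas s p n c k)
  have a1: "n < alloc s" using Inv_Init[OF \<open>Inv s\<close> init_cas(1)] by simp
  have a2: "ctor_started s" by (rule Inv_started[OF \<open>Inv s\<close> init_cas(1)]) simp_all
  define s0 where "s0 = (if tsf s n = None then s\<lparr>tsf := (tsf s)(n := Some c)\<rparr> else s)"
  have "Inv s0" unfolding s0_def using Inv_tsf[OF \<open>Inv s\<close>] \<open>Inv s\<close> by simp
  moreover have "n < alloc s0" "tsf s0 n \<noteq> None" "ctor_started s0" using a1 a2 unfolding s0_def by auto
  ultimately show ?case unfolding s0_def[symmetric] by (rule Inv_finish)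
next
  case (rs_head s p t)
  have a2: "ctor_started s" by (rule Inv_started[OF \<open>Inv s\<close> rs_head(1)]) simp_all
  show ?case by (rule Inv_setpc_init[OF \<open>Inv s\<close> Inv_vhead[OF \<open>Inv s\<close>] _ a2]) simp
next
  case (rs_stop s p t n x)
  then show ?case by (intro Inv_setpc_simple) (auto simp: Inv_def)
next
  case (rs_next s p t n x n')
  have a2: "ctor_started s" by (rule Inv_started[OF \<open>Inv s\<close> rs_next(1)]) simp_all
  show ?case by (rule Inv_setpc_simple[OF \<open>Inv s\<close>]) (simp_all add: a2)
next
  case (vr_head s p)
  have a2: "ctor_started s" by (rule Inv_started[OF \<open>Inv s\<close> vr_head(1)]) simp_all
  show ?case by (rule Inv_setpc_init[OF \<open>Inv s\<close> Inv_vhead[OF \<open>Inv s\<close>] _ a2]) simp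
next
  case (vc_head s p a b)
  have a2: "ctor_started s" by (rule Inv_started[OF \<open>Inv s\<close> vc_head(1)]) simp_all
  show ?case by (rule Inv_setpc_init[OF \<open>Inv s\<close> Inv_vhead[OF \<open>Inv s\<close>] _ a2]) simp
next
  case (vc_ret s p a b h)
  have a2: "ctor_started s" by (rule Inv_started[OF \<open>Inv s\<close> vc_ret(1)]) simp_all
  show ?case by (rule Inv_setpc_simple[OF \<open>Inv s\<close>]) (simp_all add: a2)
next
  case (vc_succ s p a b h)
  have a: "tsf s h \<noteq> None" "h < alloc s" using Inv_VC[OF \<open>Inv s\<close> vc_succ(1)] by simp_all
  have a2: "ctor_started s" by (rule Inv_started[OF \<open>Inv s\<close> vc_succ(1)]) simp_all
  define s0 where "s0 = s\<lparr>valf := (valf s)(alloc s := b), nxt := (nxt s)(alloc s := Some h),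
                        tsf := (tsf s)(alloc s := None), alloc := Suc (alloc s),
                        vhead := alloc s\<rparr>"
  have "Inv s0" unfolding Inv_def
  proof (intro conjI allI impI)
    fix q n ph k assume q: "pcs s0 q = Init n ph k"
    then have "pcs s q = Init n ph k" unfolding s0_def by simp
    then have "n < alloc s" "n = vhead s \<or> tsf s n \<noteq> None" using Inv_Init[OF \<open>Inv s\<close>] by blast+
    then show "n < alloc s0" "n = vhead s0 \<or> tsf s0 n \<noteq> None" using a vc_succ(4) unfolding s0_def by auto
  next
    fix q a' b' h' assume q: "pcs s0 q = VCCas a' b' h'"
    then have "pcs s q = VCCas a' b' h'" unfolding s0_def by simp
    then have "h' < alloc s" "tsf s h' \<noteq> None" using Inv_VC[OF \<open>Inv s\<close>] by blast+
    then show "h' < alloc s0" "tsf s0 h' \<noteq> None" unfolding s0_def by auto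
  next
    show "vhead s0 < alloc s0" unfolding s0_def by simp
  qed (use a2 in \<open>simp_all add: s0_def\<close>)
  moreover have "ctor_started s0" "alloc s < alloc s0" "alloc s = vhead s0" using a2 unfolding s0_def by auto
  ultimately have "Inv (setpc s0 p (Init (alloc s) IChk CRet))" using Inv_setpc_init by metis
  then show ?case unfolding s0_def .
next
  case (vc_fail s p a b h)
  have a2: "ctor_started s" by (rule Inv_started[OF \<open>Inv s\<close> vc_fail(1)]) simp_all
  have vh: "vhead s < alloc s" by (rule Inv_vhead[OF \<open>Inv s\<close>])
  define s0 where "s0 = s\<lparr>valf := (valf s)(alloc s := b), nxt := (nxt s)(alloc s := Some h),
                        tsf := (tsf s)(alloc s := None), alloc := Suc (alloc s)\<rparr>"
  have "Inv s0" unfolding Inv_def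
  proof (intro conjI allI impI)
    fix q n ph k assume q: "pcs s0 q = Init n ph k"
    then have "pcs s q = Init n ph k" unfolding s0_def by simp
    then have "n < alloc s" "n = vhead s \<or> tsf s n \<noteq> None" using Inv_Init[OF \<open>Inv s\<close>] by blast+
    then show "n < alloc s0" "n = vhead s0 \<or> tsf s0 n \<noteq> None" unfolding s0_def by auto
  next
    fix q a' b' h' assume q: "pcs s0 q = VCCas a' b' h'"
    then have "pcs s q = VCCas a' b' h'" unfolding s0_def by simp
    then have "h' < alloc s" "tsf s h' \<noteq> None" using Inv_VC[OF \<open>Inv s\<close>] by blast+
    then show "h' < alloc s0" "tsf s0 h' \<noteq> None" unfolding s0_def by auto
  next
    show "vhead s0 < alloc s0" using vh unfolding s0_def by simp
  qed (use a2 in \<open>simp_all add: s0_def\<close>)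
  moreover have "ctor_started s0" using a2 unfolding s0_def by auto
  ultimately have "Inv (setpc s0 p VCFailHead)" by (intro Inv_setpc_simple) auto
  then show ?case unfolding s0_def .
next
  case (vc_fail_head s p)
  have a2: "ctor_started s" by (rule Inv_started[OF \<open>Inv s\<close> vc_fail_head(1)]) simp_all
  show ?case by (rule Inv_setpc_init[OF \<open>Inv s\<close> Inv_vhead[OF \<open>Inv s\<close>] _ a2]) simp
qed

lemma Inv_init: "Inv (init_state v0)" by (simp add: Inv_def init_state_def)
lemma other_pc: "step q s s' \<Longrightarrow> q \<noteq> p \<Longrightarrow> pcs s' p = pcs s p"
  by (induction rule: step.induct) (auto simp: setpc_def finish_def)

lemma icas_pre: "step p s s' \<Longrightarrow> pcs s' p = Init n (ICas c) k \<Longrightarrow> pcs s p = Init n IRead k"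
proof (induction rule: step.induct)
  case (init_chk_valid s p n' k')
  then show ?case using cont_next_cases[of k' n'] by (auto simp: finish_def setpc_def)
next
  case (init_cas s p n' c' k')
  then show ?case using cont_next_cases[of k' n'] by (auto simp: finish_def setpc_def)
qed (auto simp: setpc_def)

lemma tsf_mono: "step q s s' \<Longrightarrow> x < alloc s \<Longrightarrow> tsf s x \<noteq> None \<Longrightarrow> tsf s' x \<noteq> None \<and> x < alloc s'"
  by (induction rule: step.induct) (auto simp: setpc_def finish_def)

lemma alloc_mono: "step q s s' \<Longrightarrow> alloc s \<le> alloc s'"
  by (induction rule: step.induct) (auto simp: setpc_def finish_def)

theorem lemmaA4:
  fixes v0 :: 'v and st :: "nat \<Rightarrow> ('p, 'v) state" and act :: "nat \<Rightarrow> 'p"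
    and N j n :: nat and c :: int and k :: "'v cont"
  assumes "execution v0 st act N"
    and "j < N"
    and "pcs (st j) (act j) = Init n (ICas c) k"
    and "tsf (st j) n = None"
  shows "vhead (st j) = n \<and>
    (\<exists>i<j. act i = act j \<and> pcs (st i) (act j) = Init n IRead k \<and>
           (\<forall>l. i < l \<and> l < j \<longrightarrow> act l \<noteq> act j) \<and> vhead (st i) = n)"
proof -
  have st0: "st 0 = init_state v0" and stp: "\<And>i. i < N \<Longrightarrow> step (act i) (st i) (st (Suc i))"
    using assms(1) by (auto simp: execution_def)
  have inv: "Inv (st i)" if "i \<le> N" for i
    using that
  proof (induction i)
    case 0 then show ?case using st0 Inv_init by simp
  next
    case (Suc i) then show ?case using stp Inv_step by (metis Suc_leD Suc_le_lessD)
  qed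
  define p where "p = act j"
  have bk: "\<exists>i<m. act i = p \<and> pcs (st i) p = Init n IRead k \<and> (\<forall>l. i < l \<and> l < m \<longrightarrow> act l \<noteq> p)"
    if "m \<le> N" "pcs (st m) p = Init n (ICas c) k" for m
    using that
  proof (induction m)
    case 0 then show ?case using st0 by (simp add: init_state_def)
  next
    case (Suc m)
    have s: "step (act m) (st m) (st (Suc m))" using stp Suc.prems by simp
    show ?case
    proof (cases "act m = p")
      case True
      then show ?thesis using icas_pre[of p "st m" "st (Suc m)"] s Suc.prems by auto
    next
      case False
      then have "pcs (st m) p = Init n (ICas c) k" using other_pc[OF s] Suc.prems by simp
      then obtain i where "i<m" "act i = p" "pcs (st i) p = Init n IRead k"
        "\<forall>l. i < l \<and> l < m \<longrightarrow> act l \<noteq> p" using Suc by auto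
      then show ?thesis using False by (metis less_Suc_eq)
    qed
  qed
  obtain i where i: "i<j" "act i = p" "pcs (st i) p = Init n IRead k"
    "\<forall>l. i < l \<and> l < j \<longrightarrow> act l \<noteq> p"
    using bk[of j] assms(2,3) p_def by auto
  have invj: "Inv (st j)" using inv assms(2) by simp
  have h1: "vhead (st j) = n" using Inv_Init[OF invj assms(3)] assms(4) by simp
  have invi: "Inv (st i)" using inv i(1) assms(2) by simp
  have alli: "n < alloc (st i)" using Inv_Init[OF invi i(3)] by simp
  have fwd: "n < alloc (st l) \<and> (tsf (st i) n \<noteq> None \<longrightarrow> tsf (st l) n \<noteq> None)"
    if "i \<le> l" "l \<le> j" for l
    using that
  proof (induction l)
    case 0 then show ?case using alli by simp
  next
    case (Suc l)
    show ?case
    proof (cases "i = Suc l")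
      case True then show ?thesis using alli by simp
    next
      case False
      then have il: "i \<le> l" "l \<le> j" using Suc.prems by auto
      have IH: "n < alloc (st l) \<and> (tsf (st i) n \<noteq> None \<longrightarrow> tsf (st l) n \<noteq> None)"
        by (rule Suc.IH[OF il])
      have lN: "l < N" using Suc.prems(2) assms(2) by simp
      have s: "step (act l) (st l) (st (Suc l))" by (rule stp[OF lN])
      have al: "n < alloc (st l)" using IH by simp
      show ?thesis using tsf_mono[OF s al] alloc_mono[OF s] IH al by auto
    qed
  qed
  have "tsf (st i) n = None" using fwd[of j] i(1) assms(4) by auto
  then have "vhead (st i) = n" using Inv_Init[OF invi i(3)] by auto
  then show ?thesis using h1 i p_def by auto
qed

end
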